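(* Let $p$ be a prime and let $(M\ N)$ be a coprime symmetric pair of $2\times 2$ integer matrices with $\operatorname{rank}_p M=1$, where $$M=\begin{pmatrix} m_1&m_2\\ p m_3&p m_4\end{pmatrix},\qquad N=\begin{pmatrix} n_1&n_2\\ n_3&n_4\end{pmatrix}$$ with $m_i,n_i\in\mathbb Z$. Then $p\mid m_1$ if and only if $p\mid n_4$, and $p\mid m_2$ if and only if $p\mid n_3$.
   Context: A pair $(M\ N)$ of $2\times 2$ matrices is called symmetric if $M\,{}^tN=N\,{}^tM$. It is a coprime pair if $M,N$ are integral and, for a $2\times 2$ rational matrix $G$, the pair $(GM\ GN)$ is integral only if $G$ is integral; equivalently, the $2\times 4$ matrix $(M\ N)$ has rank $2$ modulo every prime. $\operatorname{rank}_p M$ denotes the rank of $M$ modulo $p$. *)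

theory Defs
  imports "HOL-Analysis.Analysis"
begin

text \<open>2x2 integer matrices are represented as int^2^2 (rows indexed by 1,2).\<close>

definition symmetric_pair :: "int^2^2 \<Rightarrow> int^2^2 \<Rightarrow> bool" where
  "symmetric_pair M N \<longleftrightarrow> M ** transpose N = N ** transpose M"

definition rat_mat :: "int^2^2 \<Rightarrow> rat^2^2" where
  "rat_mat M = (\<chi> i j. of_int (M $ i $ j))"

definition integral_mat :: "rat^2^2 \<Rightarrow> bool" where
  "integral_mat A \<longleftrightarrow> (\<forall>i j. A $ i $ j \<in> \<int>)"

definition coprime_pair :: "int^2^2 \<Rightarrow> int^2^2 \<Rightarrow> bool" where
  "coprime_pair M N \<longleftrightarrow>
     (\<forall>G :: rat^2^2. integral_mat (G ** rat_mat M) \<and> integral_mat (G ** rat_mat N)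
        \<longrightarrow> integral_mat G)"

text \<open>Rank of a 2x2 integer matrix modulo p (determinantal rank: the largest size of
  a minor that is nonzero modulo p).\<close>
definition rank_mod :: "int \<Rightarrow> int^2^2 \<Rightarrow> nat" where
  "rank_mod p M =
     (if \<not> p dvd det M then 2
      else if (\<exists>i j. \<not> p dvd M $ i $ j) then 1 else 0)"

end

theory Submission
  imports Defs
begin

theorem lemma3p1:
  fixes p m1 m2 m3 m4 n1 n2 n3 n4 :: int
  assumes "prime p"
    and "M = vector [vector [m1, m2], vector [p * m3, p * m4]]"
    and "N = vector [vector [n1, n2], vector [n3, n4]]"
    and "symmetric_pair M N"
    and "coprime_pair M N"
    and "rank_mod p M = 1"
  shows "(p dvd m1 \<longleftrightarrow> p dvd n4) \<and> (p dvd m2 \<longleftrightarrow> p dvd n3)"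
proof -
  have M: "M $ 1 $ 1 = m1" "M $ 1 $ 2 = m2" "M $ 2 $ 1 = p*m3" "M $ 2 $ 2 = p*m4"
    using assms(2) by simp_all
  have N: "N $ 1 $ 1 = n1" "N $ 1 $ 2 = n2" "N $ 2 $ 1 = n3" "N $ 2 $ 2 = n4"
    using assms(3) by simp_all
  have p1: "p > 1" using assms(1) prime_gt_1_int by blast
  have "(M ** transpose N) $ 1 $ 2 = (N ** transpose M) $ 1 $ 2"
    using assms(4) unfolding symmetric_pair_def by simp
  hence sym: "m1*n3 + m2*n4 = n1*(p*m3) + n2*(p*m4)"
    by (simp add: matrix_matrix_mult_def transpose_def sum_2 M N)
  have dv: "p dvd m1*n3 + m2*n4" unfolding sym by simp
  have mnz: "\<not> (p dvd m1 \<and> p dvd m2)"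
  proof
    assume h: "p dvd m1 \<and> p dvd m2"
    have "\<forall>i j. p dvd M $ i $ j" using h by (simp add: forall_2 M)
    moreover have "p dvd det M"
      using h by (simp add: det_2 M)
    ultimately show False using assms(6) unfolding rank_mod_def by simp
  qed
  have nnz: "\<not> (p dvd n3 \<and> p dvd n4)"
  proof
    assume h: "p dvd n3 \<and> p dvd n4"
    then obtain a b where ab: "n3 = p*a" "n4 = p*b" by (auto elim!: dvdE)
    define G :: "rat^2^2" where "G = (\<chi> i j. if i = j then (if i = 1 then 1 else 1 / of_int p) else 0)"
    have G: "G $ 1 $ 1 = 1" "G $ 1 $ 2 = 0" "G $ 2 $ 1 = 0" "G $ 2 $ 2 = 1 / of_int p"
      unfolding G_def by simp_all
    have pnz: "(of_int p :: rat) \<noteq> 0" using p1 by simp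
    have "integral_mat (G ** rat_mat M)"
      unfolding integral_mat_def
      by (simp add: forall_2 matrix_matrix_mult_def sum_2 G rat_mat_def M pnz)
    moreover have "integral_mat (G ** rat_mat N)"
      unfolding integral_mat_def
      by (simp add: forall_2 matrix_matrix_mult_def sum_2 G rat_mat_def N ab pnz)
    ultimately have "integral_mat G" using assms(5) unfolding coprime_pair_def by blast
    hence "G $ 2 $ 2 \<in> \<int>" unfolding integral_mat_def by blast
    then obtain k where k: "1 / (of_int p :: rat) = of_int k" using G by (metis Ints_cases)
    hence "(of_int (k*p) :: rat) = 1" using pnz by (simp add: field_simps)
    hence "k * p = 1" by (metis of_int_eq_1_iff)
    hence "p dvd 1" by (metis dvd_triv_right)
    thus False using p1 by auto
  qed
  have pr: "\<And>a b. p dvd a*b \<Longrightarrow> p dvd a \<or> p dvd b"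
    using assms(1) prime_dvd_mult_iff by blast
  show ?thesis
  proof (intro conjI iffI)
    assume "p dvd m1"
    hence "p dvd m2*n4" using dv by (simp add: dvd_add_right_iff)
    thus "p dvd n4" using pr mnz \<open>p dvd m1\<close> by blast
  next
    assume "p dvd n4"
    hence "p dvd m1*n3" using dv by (simp add: dvd_add_left_iff)
    thus "p dvd m1" using pr nnz \<open>p dvd n4\<close> by blast
  next
    assume "p dvd m2"
    hence "p dvd m1*n3" using dv by (simp add: dvd_add_left_iff)
    thus "p dvd n3" using pr mnz \<open>p dvd m2\<close> by blast
  next
    assume "p dvd n3"
    hence "p dvd m2*n4" using dv by (simp add: dvd_add_right_iff)
    thus "p dvd m2" using pr nnz \<open>p dvd n3\<close> by blast
  qed
qed

end
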